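(* Let $f:\mathbb{R}^{2}\to\mathbb{R}$ be smooth and normal, and for $k_{1}\neq0$, $k_{2}\neq0$, $x,y\in\mathbb{R}$ let $F(k_{1},y)=\lim_{r\to\infty}\int_{-r}^{r}f(x,y)e^{-ik_{1}x}\,dx$ and $G(x,k_{2})=\lim_{r\to\infty}\int_{-r}^{r}f(x,y)e^{-ik_{2}y}\,dy$. Then for $k_{1}\neq0$, $k_{2}\neq0$ the integrals $F(k_{1},k_{2})=\int_{-\infty}^{\infty}F(k_{1},y)e^{-ik_{2}y}\,dy$ and $G(k_{1},k_{2})=\int_{-\infty}^{\infty}G(x,k_{2})e^{-ik_{1}x}\,dx$ are well defined, and $F(k_{1},k_{2})=G(k_{1},k_{2})=\lim_{m\to\infty,n\to\infty}\int_{-m}^{m}\int_{-n}^{n}f(x,y)e^{-ik_{1}x}e^{-ik_{2}y}\,dx\,dy.$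
   Context: One-variable notions: a smooth $g:\mathbb{R}\setminus V\to\mathbb{R}$, $V\subset\mathbb{R}$ bounded closed, is analytic at infinity if there exist $\epsilon_{1},\epsilon_{2}>0$ such that $g(1/t)=\sum_{n\geq1}a_{n}t^{n}$ for $0<t<\epsilon_{1}$ and $g(1/t)=\sum_{n\geq1}b_{n}t^{n}$ for $-\epsilon_{2}<t<0$, with real coefficients and both power series absolutely convergent on the respective intervals. Two-variable notions: for smooth $f:\mathbb{R}^{2}\to\mathbb{R}$, $f$ is of very moderate decrease if there is $C>0$ with $|f(x,y)|\leq\frac{C}{|(x,y)|}$ for $|(x,y)|>1$, and of moderate decrease if $|f(x,y)|\leq\frac{C}{|(x,y)|^{2}}$ for $|(x,y)|>1$. For fixed $x$ write $f_{x}(y)=f(x,y)$ and for fixed $y$ write $f_{y}(x)=f(x,y)$. $f$ is normal if: (i) for every $x$, $f_{x}$ is analytic at infinity; (ii) for every $y$, $f_{y}$ is analytic at infinity; (iii) $f$ is of very moderate decrease; (iv) $\frac{\partial f}{\partial x}$ and $\frac{\partial f}{\partial y}$ are of moderate decrease; (v) there is a uniform bound on the number of zeros of $f_{x},(f_{x})',(f_{x})''$ and of $f_{y},(f_{y})',(f_{y})''$. *)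

theory Defs
  imports "HOL-Analysis.Analysis"
begin

definition pdx :: "(real \<times> real \<Rightarrow> real) \<Rightarrow> real \<times> real \<Rightarrow> real" where
  "pdx g = (\<lambda>(x, y). deriv (\<lambda>s. g (s, y)) x)"

definition pdy :: "(real \<times> real \<Rightarrow> real) \<Rightarrow> real \<times> real \<Rightarrow> real" where
  "pdy g = (\<lambda>(x, y). deriv (\<lambda>t. g (x, t)) y)"

inductive_set iter_partials :: "(real \<times> real \<Rightarrow> real) \<Rightarrow> (real \<times> real \<Rightarrow> real) set"
  for f where
  base: "f \<in> iter_partials f"
| dx: "g \<in> iter_partials f \<Longrightarrow> pdx g \<in> iter_partials f"
| dy: "g \<in> iter_partials f \<Longrightarrow> pdy g \<in> iter_partials f"

definition smooth2 :: "(real \<times> real \<Rightarrow> real) \<Rightarrow> bool" where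
  "smooth2 f \<longleftrightarrow> (\<forall>g \<in> iter_partials f. continuous_on UNIV g \<and>
      (\<forall>x y. (\<lambda>s. g (s, y)) differentiable (at x) \<and> (\<lambda>t. g (x, t)) differentiable (at y)))"

text \<open>One-variable analyticity at infinity (for functions defined on all of R, i.e. V empty).\<close>
definition analytic_at_infinity :: "(real \<Rightarrow> real) \<Rightarrow> bool" where
  "analytic_at_infinity g \<longleftrightarrow>
     (\<exists>e1>0. \<exists>e2>0. \<exists>a b :: nat \<Rightarrow> real.
        (\<forall>t. 0 < t \<and> t < e1 \<longrightarrow>
            summable (\<lambda>n. \<bar>a n * t ^ Suc n\<bar>) \<and> g (1 / t) = (\<Sum>n. a n * t ^ Suc n)) \<and>
        (\<forall>t. - e2 < t \<and> t < 0 \<longrightarrow>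
            summable (\<lambda>n. \<bar>b n * t ^ Suc n\<bar>) \<and> g (1 / t) = (\<Sum>n. b n * t ^ Suc n)))"

definition very_moderate_decrease :: "(real \<times> real \<Rightarrow> real) \<Rightarrow> bool" where
  "very_moderate_decrease f \<longleftrightarrow>
     (\<exists>C>0. \<forall>p. norm p > 1 \<longrightarrow> \<bar>f p\<bar> \<le> C / norm p)"

definition moderate_decrease :: "(real \<times> real \<Rightarrow> real) \<Rightarrow> bool" where
  "moderate_decrease f \<longleftrightarrow>
     (\<exists>C>0. \<forall>p. norm p > 1 \<longrightarrow> \<bar>f p\<bar> \<le> C / (norm p)\<^sup>2)"

definition zeros_bounded :: "nat \<Rightarrow> (real \<Rightarrow> real) \<Rightarrow> bool" where
  "zeros_bounded N g \<longleftrightarrow> finite {t. g t = 0} \<and> card {t. g t = 0} \<le> N"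

definition normal :: "(real \<times> real \<Rightarrow> real) \<Rightarrow> bool" where
  "normal f \<longleftrightarrow>
     (\<forall>x. analytic_at_infinity (\<lambda>y. f (x, y))) \<and>
     (\<forall>y. analytic_at_infinity (\<lambda>x. f (x, y))) \<and>
     very_moderate_decrease f \<and>
     moderate_decrease (pdx f) \<and> moderate_decrease (pdy f) \<and>
     (\<exists>N. (\<forall>x. zeros_bounded N (\<lambda>y. f (x, y)) \<and>
               zeros_bounded N (deriv (\<lambda>y. f (x, y))) \<and>
               zeros_bounded N (deriv (deriv (\<lambda>y. f (x, y))))) \<and>
          (\<forall>y. zeros_bounded N (\<lambda>x. f (x, y)) \<and>
               zeros_bounded N (deriv (\<lambda>x. f (x, y))) \<and>
               zeros_bounded N (deriv (deriv (\<lambda>x. f (x, y))))))"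

end

theory Submission
  imports Defs
begin


lemma sign_const:
  fixes g' :: "real \<Rightarrow> real"
  assumes cont: "continuous_on UNIV g'" and nz: "\<forall>z. a < z \<and> z < b \<longrightarrow> g' z \<noteq> 0"
  shows "(\<forall>t\<in>{a..b}. g' t \<ge> 0) \<or> (\<forall>t\<in>{a..b}. g' t \<le> 0)"
proof (rule ccontr)
  assume "\<not> ?thesis"
  then obtain s t where s: "s \<in> {a..b}" "g' s < 0" and t: "t \<in> {a..b}" "g' t > 0" by force
  have c: "continuous_on {x..y} g'" for x y using cont continuous_on_subset by blast
  show False
  proof (cases "s \<le> t")
    case True
    from IVT'[of g' s 0 t, OF _ _ True c] s t obtain x where "s \<le> x" "x \<le> t" "g' x = 0" by auto
    moreover have "x \<noteq> s" "x \<noteq> t" using s t \<open>g' x = 0\<close> by auto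
    ultimately show False using nz s t by force
  next
    case False
    from IVT2'[where f=g' and a=t and b=s and y=0, OF _ _ _ c] s t False obtain x where "t \<le> x" "x \<le> s" "g' x = 0" by auto
    moreover have "x \<noteq> s" "x \<noteq> t" using s t \<open>g' x = 0\<close> by auto
    ultimately show False using nz s t by force
  qed
qed

lemma tv_bound:
  fixes g g' :: "real \<Rightarrow> real"
  assumes der: "\<And>t. (g has_real_derivative g' t) (at t)" and cont: "continuous_on UNIV g'"
    and fin: "finite {t. g' t = 0}"
  shows "a \<le> b \<Longrightarrow> (\<forall>t\<in>{a..b}. \<bar>g t\<bar> \<le> M) \<Longrightarrow>
     integral {a..b} (\<lambda>t. \<bar>g' t\<bar>) \<le> 2 * (real (card ({t. g' t = 0} \<inter> {a<..<b})) + 1) * M"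
proof -
  define Z where "Z = {t. g' t = 0}"
  have intg: "(\<lambda>t. \<bar>g' t\<bar>) integrable_on {x..y}" for x y
    by (rule integrable_continuous_interval) (intro continuous_intros continuous_on_subset[OF cont], simp)
  have ftc: "(g' has_integral (g y - g x)) {x..y}" if "x \<le> y" for x y
    using that der
    by (intro fundamental_theorem_of_calculus)
       (auto simp: has_real_derivative_iff_has_vector_derivative intro: has_vector_derivative_at_within)
  have main: "\<forall>a b. a \<le> b \<longrightarrow> card (Z \<inter> {a<..<b}) = c \<longrightarrow> (\<forall>t\<in>{a..b}. \<bar>g t\<bar> \<le> M) \<longrightarrow>
     integral {a..b} (\<lambda>t. \<bar>g' t\<bar>) \<le> 2 * (real c + 1) * M" for c
  proof (induction c rule: less_induct)
    case (less c)
    show ?case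
    proof (intro allI impI)
      fix a b assume ab: "a \<le> b" and cZ: "card (Z \<inter> {a<..<b}) = c" and M: "\<forall>t\<in>{a..b}. \<bar>g t\<bar> \<le> M"
      have M0: "0 \<le> M" using M ab by (meson abs_ge_zero atLeastAtMost_iff order_refl order_trans)
      show "integral {a..b} (\<lambda>t. \<bar>g' t\<bar>) \<le> 2 * (real c + 1) * M"
      proof (cases "\<exists>z. a < z \<and> z < b \<and> g' z = 0")
        case True
        then obtain z where z: "a < z" "z < b" "g' z = 0" by blast
        define c1 where "c1 = card (Z \<inter> {a<..<z})"
        define c2 where "c2 = card (Z \<inter> {z<..<b})"
        have fa: "finite (Z \<inter> {a<..<b})" using fin Z_def by auto
        have sub: "(Z \<inter> {a<..<z}) \<union> (Z \<inter> {z<..<b}) \<union> {z} \<subseteq> Z \<inter> {a<..<b}"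
          using z Z_def by auto
        have "card ((Z \<inter> {a<..<z}) \<union> (Z \<inter> {z<..<b}) \<union> {z}) = c1 + c2 + 1"
          unfolding c1_def c2_def
          by (subst card_Un_disjoint, (use fin Z_def in auto)[3])+ (use fin Z_def in auto)
        with card_mono[OF fa sub] cZ have cs: "c1 + c2 + 1 \<le> c" by simp
        have i1: "integral {a..z} (\<lambda>t. \<bar>g' t\<bar>) \<le> 2 * (real c1 + 1) * M"
          using less.IH[of c1] cs z M ab c1_def by auto
        have i2: "integral {z..b} (\<lambda>t. \<bar>g' t\<bar>) \<le> 2 * (real c2 + 1) * M"
          using less.IH[of c2] cs z M ab c2_def by auto
        have "integral {a..b} (\<lambda>t. \<bar>g' t\<bar>) = integral {a..z} (\<lambda>t. \<bar>g' t\<bar>) + integral {z..b} (\<lambda>t. \<bar>g' t\<bar>)"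
          using Henstock_Kurzweil_Integration.integral_combine[where a=a and c=z and b=b, OF _ _ intg] z by simp
        also have "\<dots> \<le> 2 * (real c1 + 1) * M + 2 * (real c2 + 1) * M" using i1 i2 by linarith
        also have "\<dots> \<le> 2 * (real c + 1) * M"
        proof -
          have "real c1 + real c2 + 2 \<le> real c + 1" using cs by linarith
          then have "(real c1 + real c2 + 2) * M \<le> (real c + 1) * M" using M0 by (rule mult_right_mono)
          then show ?thesis by (simp add: algebra_simps)
        qed
        finally show ?thesis .
      next
        case False
        then have sc: "(\<forall>t\<in>{a..b}. g' t \<ge> 0) \<or> (\<forall>t\<in>{a..b}. g' t \<le> 0)"
          using sign_const[OF cont] by blast
        have gab: "\<bar>g b - g a\<bar> \<le> 2 * M"
        proof -
          have "\<bar>g b\<bar> \<le> M" "\<bar>g a\<bar> \<le> M" using M ab by auto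
          then show ?thesis by linarith
        qed
        from sc show ?thesis
        proof
          assume pos: "\<forall>t\<in>{a..b}. g' t \<ge> 0"
          have "integral {a..b} (\<lambda>t. \<bar>g' t\<bar>) = integral {a..b} g'"
            by (rule integral_cong) (use pos in auto)
          also have "\<dots> = g b - g a" using ftc[OF ab] by (rule integral_unique)
          finally have "integral {a..b} (\<lambda>t. \<bar>g' t\<bar>) \<le> 2 * M" using gab by linarith
          moreover have "2 * M \<le> 2 * (real c + 1) * M"
          proof -
            have "0 \<le> real c * M" using M0 by simp
            then show ?thesis by (simp add: algebra_simps)
          qed
          ultimately show ?thesis by linarith
        next
          assume neg: "\<forall>t\<in>{a..b}. g' t \<le> 0"
          have "integral {a..b} (\<lambda>t. \<bar>g' t\<bar>) = integral {a..b} (\<lambda>t. - g' t)"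
            by (rule integral_cong) (use neg in auto)
          also have "\<dots> = - (g b - g a)" using ftc[OF ab] by (simp add: integral_unique)
          finally have "integral {a..b} (\<lambda>t. \<bar>g' t\<bar>) \<le> 2 * M" using gab by linarith
          moreover have "2 * M \<le> 2 * (real c + 1) * M"
          proof -
            have "0 \<le> real c * M" using M0 by simp
            then show ?thesis by (simp add: algebra_simps)
          qed
          ultimately show ?thesis by linarith
        qed
      qed
    qed
  qed
  show "a \<le> b \<Longrightarrow> (\<forall>t\<in>{a..b}. \<bar>g t\<bar> \<le> M) \<Longrightarrow> ?thesis"
    using main Z_def by blast
qed

lemma norm_exp_imag [simp]: "norm (exp (- \<i> * of_real k * of_real t)) = 1"
  by (simp add: norm_exp_eq_Re)

lemma cont_exp_imag [continuous_intros]: "continuous_on S (\<lambda>t. exp (- \<i> * of_real k * of_real (t::real)))"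
  by (intro continuous_intros)

lemma osc:
  fixes g g' :: "real \<Rightarrow> real" and k M :: real
  assumes der: "\<And>t. (g has_real_derivative g' t) (at t)" and cont: "continuous_on UNIV g'"
    and fin: "finite {t. g' t = 0}" and cardN: "card {t. g' t = 0} \<le> N"
    and k: "k \<noteq> 0" and M: "\<forall>t\<in>{a..b}. \<bar>g t\<bar> \<le> M" and M0: "0 \<le> M"
  shows "norm (integral {a..b} (\<lambda>t. complex_of_real (g t) * exp (- \<i> * of_real k * of_real t)))
           \<le> (2 * real N + 4) * M / \<bar>k\<bar>"
proof (cases "a \<le> b")
  case False
  then have "{a..b} = {}" by auto
  then show ?thesis using M0 by simp
next
  case ab: True
  define c where "c = - \<i> * complex_of_real k"
  have c0: "c \<noteq> 0" using k by (simp add: c_def)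
  have nc: "norm c = \<bar>k\<bar>" by (simp add: c_def norm_mult)
  have ec: "exp (c * of_real t) = exp (- \<i> * of_real k * of_real t)" for t by (simp add: c_def)
  define E where "E t = exp (c * of_real t) / c" for t
  have nE: "norm (E t) = 1 / \<bar>k\<bar>" for t
    unfolding E_def using nc ec[of t] by (simp add: norm_divide)
  have dE: "(E has_vector_derivative exp (c * of_real t)) (at t within X)" for t X
  proof -
    have "((\<lambda>z. exp (c * z) / c) has_field_derivative exp (c * of_real t)) (at (of_real t))"
      using c0 by (auto intro!: derivative_eq_intros)
    then show ?thesis unfolding E_def by (rule has_vector_derivative_real_field)
  qed
  have dg: "((\<lambda>t. complex_of_real (g t)) has_vector_derivative of_real (g' t)) (at t within X)" for t X
    using der[of t] by (intro has_vector_derivative_of_real) (rule has_field_derivative_at_within)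
  define H where "H t = complex_of_real (g t) * E t" for t
  have dH: "(H has_vector_derivative (complex_of_real (g t) * exp (c * of_real t) + of_real (g' t) * E t)) (at t within X)" for t X
    unfolding H_def using has_vector_derivative_mult[OF dg dE] .
  have ftc: "((\<lambda>t. complex_of_real (g t) * exp (c * of_real t) + of_real (g' t) * E t) has_integral (H b - H a)) {a..b}"
    using ab dH by (intro fundamental_theorem_of_calculus) auto
  have gc: "continuous_on UNIV g"
    using der by (metis DERIV_continuous continuous_at_imp_continuous_on)
  have i1: "(\<lambda>t. complex_of_real (g t) * exp (c * of_real t)) integrable_on {a..b}"
    by (rule integrable_continuous_interval) (intro continuous_intros continuous_on_subset[OF gc], simp)
  have i2: "(\<lambda>t. complex_of_real (g' t) * E t) integrable_on {a..b}"
    unfolding E_def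
    by (rule integrable_continuous_interval) (intro continuous_intros continuous_on_subset[OF cont], use c0 in auto)
  have eq: "integral {a..b} (\<lambda>t. complex_of_real (g t) * exp (c * of_real t))
      = (H b - H a) - integral {a..b} (\<lambda>t. complex_of_real (g' t) * E t)"
  proof -
    have "H b - H a = integral {a..b} (\<lambda>t. complex_of_real (g t) * exp (c * of_real t) + of_real (g' t) * E t)"
      using ftc by (simp add: integral_unique)
    also have "\<dots> = integral {a..b} (\<lambda>t. complex_of_real (g t) * exp (c * of_real t)) + integral {a..b} (\<lambda>t. complex_of_real (g' t) * E t)"
      using i1 i2 by (rule integral_add)
    finally show ?thesis by simp
  qed
  have ia: "(\<lambda>t. \<bar>g' t\<bar>) integrable_on {a..b}"
    by (rule integrable_continuous_interval) (intro continuous_intros continuous_on_subset[OF cont], simp)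
  have tv: "integral {a..b} (\<lambda>t. \<bar>g' t\<bar>) \<le> 2 * (real (card ({t. g' t = 0} \<inter> {a<..<b})) + 1) * M"
    using tv_bound[OF der cont fin ab M] .
  have cc: "card ({t. g' t = 0} \<inter> {a<..<b}) \<le> N"
    using card_mono[OF fin, of "{t. g' t = 0} \<inter> {a<..<b}"] cardN by auto
  have tv2: "integral {a..b} (\<lambda>t. \<bar>g' t\<bar>) \<le> 2 * (real N + 1) * M"
  proof -
    have "real (card ({t. g' t = 0} \<inter> {a<..<b})) + 1 \<le> real N + 1" using cc by simp
    then have "2 * (real (card ({t. g' t = 0} \<inter> {a<..<b})) + 1) * M \<le> 2 * (real N + 1) * M"
      using M0 by (simp add: mult_right_mono)
    then show ?thesis using tv by linarith
  qed
  have n3: "norm (integral {a..b} (\<lambda>t. complex_of_real (g' t) * E t)) \<le> integral {a..b} (\<lambda>t. \<bar>g' t\<bar> / \<bar>k\<bar>)"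
    by (rule integral_norm_bound_integral[OF i2]) (use integrable_on_divide[OF ia] nE in \<open>auto simp: norm_mult\<close>)
  also have "\<dots> = integral {a..b} (\<lambda>t. \<bar>g' t\<bar>) / \<bar>k\<bar>" by simp
  also have "\<dots> \<le> 2 * (real N + 1) * M / \<bar>k\<bar>" using tv2 k by (simp add: divide_right_mono)
  finally have n3': "norm (integral {a..b} (\<lambda>t. complex_of_real (g' t) * E t)) \<le> 2 * (real N + 1) * M / \<bar>k\<bar>" .
  have nH: "norm (H t) \<le> M / \<bar>k\<bar>" if "t \<in> {a..b}" for t
    using M that nE k by (simp add: H_def norm_mult divide_right_mono)
  have "norm (integral {a..b} (\<lambda>t. complex_of_real (g t) * exp (c * of_real t)))
        \<le> norm (H b) + norm (H a) + norm (integral {a..b} (\<lambda>t. complex_of_real (g' t) * E t))"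
    unfolding eq using norm_triangle_ineq4[of "H b" "H a"]
      norm_triangle_ineq4[of "H b - H a" "integral {a..b} (\<lambda>t. complex_of_real (g' t) * E t)"] by linarith
  also have "\<dots> \<le> M / \<bar>k\<bar> + M / \<bar>k\<bar> + 2 * (real N + 1) * M / \<bar>k\<bar>"
    using nH[of a] nH[of b] ab n3' by (intro add_mono) auto
  also have "\<dots> = (2 * real N + 4) * M / \<bar>k\<bar>" by (simp add: add_divide_distrib[symmetric] algebra_simps)
  finally show ?thesis by (simp add: ec)
qed

lemma byparts:
  fixes g g' :: "real \<Rightarrow> real" and k :: real
  assumes der: "\<And>t. (g has_real_derivative g' t) (at t)" and cont: "continuous_on UNIV g'"
    and k: "k \<noteq> 0" and ab: "a \<le> b"
  shows "integral {a..b} (\<lambda>t. complex_of_real (g t) * exp (- \<i> * of_real k * of_real t))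
     = of_real (g b) * (exp (- \<i> * of_real k * of_real b) / (- \<i> * of_real k))
       - of_real (g a) * (exp (- \<i> * of_real k * of_real a) / (- \<i> * of_real k))
       - integral {a..b} (\<lambda>t. of_real (g' t) * exp (- \<i> * of_real k * of_real t)) / (- \<i> * of_real k)"
proof -
  define c where "c = - \<i> * complex_of_real k"
  have c0: "c \<noteq> 0" using k by (simp add: c_def)
  define E where "E t = exp (c * of_real t) / c" for t
  have dE: "(E has_vector_derivative exp (c * of_real t)) (at t within X)" for t X
  proof -
    have "((\<lambda>z. exp (c * z) / c) has_field_derivative exp (c * of_real t)) (at (of_real t))"
      using c0 by (auto intro!: derivative_eq_intros)
    then show ?thesis unfolding E_def by (rule has_vector_derivative_real_field)
  qed
  have dg: "((\<lambda>t. complex_of_real (g t)) has_vector_derivative of_real (g' t)) (at t within X)" for t X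
    using der[of t] by (intro has_vector_derivative_of_real) (rule has_field_derivative_at_within)
  define H where "H t = complex_of_real (g t) * E t" for t
  have dH: "(H has_vector_derivative (complex_of_real (g t) * exp (c * of_real t) + of_real (g' t) * E t)) (at t within X)" for t X
    unfolding H_def using has_vector_derivative_mult[OF dg dE] .
  have ftc: "((\<lambda>t. complex_of_real (g t) * exp (c * of_real t) + of_real (g' t) * E t) has_integral (H b - H a)) {a..b}"
    using ab dH by (intro fundamental_theorem_of_calculus) auto
  have gc: "continuous_on UNIV g"
    using der by (metis DERIV_continuous continuous_at_imp_continuous_on)
  have i1: "(\<lambda>t. complex_of_real (g t) * exp (c * of_real t)) integrable_on {a..b}"
    by (rule integrable_continuous_interval) (intro continuous_intros continuous_on_subset[OF gc], simp)
  have i2: "(\<lambda>t. complex_of_real (g' t) * E t) integrable_on {a..b}"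
    unfolding E_def
    by (rule integrable_continuous_interval) (intro continuous_intros continuous_on_subset[OF cont], use c0 in auto)
  have "H b - H a = integral {a..b} (\<lambda>t. complex_of_real (g t) * exp (c * of_real t) + of_real (g' t) * E t)"
    using ftc by (simp add: integral_unique)
  also have "\<dots> = integral {a..b} (\<lambda>t. complex_of_real (g t) * exp (c * of_real t)) + integral {a..b} (\<lambda>t. complex_of_real (g' t) * E t)"
    using i1 i2 by (rule integral_add)
  finally have eq: "integral {a..b} (\<lambda>t. complex_of_real (g t) * exp (c * of_real t))
      = (H b - H a) - integral {a..b} (\<lambda>t. complex_of_real (g' t) * E t)" by simp
  have "integral {a..b} (\<lambda>t. complex_of_real (g' t) * E t) = integral {a..b} (\<lambda>t. complex_of_real (g' t) * exp (c * of_real t)) / c"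
    unfolding E_def by (simp add: times_divide_eq_right)
  with eq show ?thesis by (simp add: H_def E_def c_def)
qed

lemma cont_param:
  fixes \<phi> :: "real \<Rightarrow> real \<Rightarrow> complex"
  assumes "continuous_on UNIV (\<lambda>(x, y). \<phi> x y)"
  shows "continuous_on UNIV (\<lambda>y. integral {a..b} (\<lambda>x. \<phi> x y))"
proof -
  have "continuous_on (UNIV \<times> cbox a b) ((\<lambda>(x, y). \<phi> x y) \<circ> prod.swap)"
    by (rule continuous_on_compose[OF continuous_on_swap continuous_on_subset[OF assms]]) simp
  then have "continuous_on (UNIV \<times> cbox a b) (\<lambda>(y, x). \<phi> x y)"
    by (simp add: o_def case_prod_beta)
  from integral_continuous_on_param[OF this] show ?thesis by simp
qed

lemma int_inv_sq:
  fixes n :: real assumes n: "n > 0"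
  shows "integral {c..d} (\<lambda>y. 1 / (n\<^sup>2 + y\<^sup>2)) \<le> pi / n"
proof (cases "c \<le> d")
  case False then show ?thesis using n by simp
next
  case True
  have "((\<lambda>y. 1 / (n\<^sup>2 + y\<^sup>2)) has_integral (arctan (d / n) / n - arctan (c / n) / n)) {c..d}"
  proof (rule fundamental_theorem_of_calculus[OF True])
    fix y assume "y \<in> {c..d}"
    have "((\<lambda>y. arctan (y / n) / n) has_real_derivative 1 / (n\<^sup>2 + y\<^sup>2)) (at y)"
      using n add_pos_nonneg[of "n * (n * (n * n))" "n * (n * (y * y))"]
      by (auto intro!: derivative_eq_intros simp: field_simps power2_eq_square)
    then have "((\<lambda>y. arctan (y / n) / n) has_real_derivative 1 / (n\<^sup>2 + y\<^sup>2)) (at y)" .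
    moreover have True ..
    ultimately show "((\<lambda>y. arctan (y / n) / n) has_vector_derivative 1 / (n\<^sup>2 + y\<^sup>2)) (at y within {c..d})"
      by (simp add: has_real_derivative_iff_has_vector_derivative has_vector_derivative_at_within)
  qed
  then have "integral {c..d} (\<lambda>y. 1 / (n\<^sup>2 + y\<^sup>2)) = (arctan (d / n) - arctan (c / n)) / n"
    by (simp add: integral_unique diff_divide_distrib)
  also have "\<dots> \<le> pi / n"
    using arctan_bounded[of "d/n"] arctan_bounded[of "c/n"] n by (intro divide_right_mono) auto
  finally show ?thesis .
qed

lemma norm_pair_ge1: "\<bar>x\<bar> \<le> norm (x::real, y::real)"
  by (metis fst_conv norm_fst_le real_norm_def)

lemma norm_pair_ge2: "\<bar>y\<bar> \<le> norm (x::real, y::real)"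
  by (metis snd_conv norm_snd_le real_norm_def)

lemma norm_pair_sq: "(norm (x::real, y::real))\<^sup>2 = x\<^sup>2 + y\<^sup>2"
  by (simp add: norm_Pair)

lemma KE:
  fixes h hx hxx hy :: "real \<times> real \<Rightarrow> real"
  assumes ch: "continuous_on UNIV h" and chx: "continuous_on UNIV hx"
    and chxx: "continuous_on UNIV hxx" and chy: "continuous_on UNIV hy"
    and dx: "\<And>x y. ((\<lambda>s. h (s, y)) has_real_derivative hx (x, y)) (at x)"
    and dxx: "\<And>x y. ((\<lambda>s. hx (s, y)) has_real_derivative hxx (x, y)) (at x)"
    and dy: "\<And>x y. ((\<lambda>t. h (x, t)) has_real_derivative hy (x, y)) (at y)"
    and zx: "\<And>y. finite {x. hxx (x, y) = 0} \<and> card {x. hxx (x, y) = 0} \<le> N"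
    and zy: "\<And>x. finite {y. hy (x, y) = 0} \<and> card {y. hy (x, y) = 0} \<le> N"
    and bh: "\<And>p. norm p > 1 \<Longrightarrow> \<bar>h p\<bar> \<le> C / norm p"
    and bhx: "\<And>p. norm p > 1 \<Longrightarrow> \<bar>hx p\<bar> \<le> C / (norm p)\<^sup>2"
    and C0: "0 \<le> C" and k1: "k1 \<noteq> 0" and k2: "k2 \<noteq> 0" and n: "n > 1"
    and ax: "\<forall>x\<in>{a..b}. n \<le> \<bar>x\<bar>"
  shows "norm (integral {c..d} (\<lambda>y. integral {a..b} (\<lambda>x. complex_of_real (h (x, y))
            * exp (- \<i> * of_real k1 * of_real x) * exp (- \<i> * of_real k2 * of_real y))))
         \<le> (2 * real N + 4) * C * (2 / (\<bar>k1\<bar> * \<bar>k2\<bar>) + pi / k1\<^sup>2) / n"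
proof (cases "a \<le> b")
  case False
  then show ?thesis using C0 n by simp
next
  case ab: True
  define e1 where "e1 x = exp (- \<i> * of_real k1 * of_real x)" for x
  define e2 where "e2 y = exp (- \<i> * of_real k2 * of_real y)" for y
  define c1 where "c1 = - \<i> * complex_of_real k1"
  have c10: "c1 \<noteq> 0" using k1 by (simp add: c1_def)
  have nc1: "norm c1 = \<bar>k1\<bar>" by (simp add: c1_def norm_mult)
  define Ea where "Ea = e1 a / c1"
  define Eb where "Eb = e1 b / c1"
  have nEa: "norm Ea = 1 / \<bar>k1\<bar>" unfolding Ea_def e1_def using nc1 by (simp add: norm_divide)
  have nEb: "norm Eb = 1 / \<bar>k1\<bar>" unfolding Eb_def e1_def using nc1 by (simp add: norm_divide)
  define P where "P y = integral {a..b} (\<lambda>x. complex_of_real (hx (x, y)) * e1 x)" for y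
  have lin: "continuous_on UNIV (\<lambda>s. g (s, y))" "continuous_on UNIV (\<lambda>t. g (x, t))"
    if "continuous_on UNIV g" for g :: "real \<times> real \<Rightarrow> real" and x y
    by (rule continuous_on_compose2[OF that], auto intro!: continuous_intros)+
  have inner: "integral {a..b} (\<lambda>x. complex_of_real (h (x, y)) * e1 x * e2 y)
       = (of_real (h (b, y)) * Eb - of_real (h (a, y)) * Ea - P y / c1) * e2 y" for y
  proof -
    have "integral {a..b} (\<lambda>x. complex_of_real (h (x, y)) * e1 x * e2 y)
         = integral {a..b} (\<lambda>x. complex_of_real (h (x, y)) * e1 x) * e2 y" by simp
    also have "integral {a..b} (\<lambda>x. complex_of_real (h (x, y)) * e1 x)
         = of_real (h (b, y)) * Eb - of_real (h (a, y)) * Ea - P y / c1"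
      unfolding e1_def Ea_def Eb_def P_def c1_def
      by (rule byparts[OF dx lin(1)[OF chx] k1 ab])
    finally show ?thesis .
  qed
  have ce2: "continuous_on UNIV e2" unfolding e2_def by (intro continuous_intros)
  have cP: "continuous_on UNIV P"
  proof -
    have "continuous_on UNIV (\<lambda>p. complex_of_real (hx p) * e1 (fst p))"
      unfolding e1_def by (intro continuous_intros continuous_on_compose2[OF chx]) auto
    then have "continuous_on UNIV (\<lambda>(x, y). complex_of_real (hx (x, y)) * e1 x)"
      by (simp add: case_prod_beta)
    then show ?thesis unfolding P_def by (rule cont_param)
  qed
  have iA: "(\<lambda>y. complex_of_real (h (z, y)) * e2 y) integrable_on {c..d}" for z
    by (rule integrable_continuous_interval)
      (intro continuous_intros continuous_on_subset[OF ce2] continuous_on_subset[OF lin(2)[OF ch]], auto)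
  have iP: "(\<lambda>y. P y * e2 y) integrable_on {c..d}"
    by (rule integrable_continuous_interval)
      (intro continuous_intros continuous_on_subset[OF ce2] continuous_on_subset[OF cP], auto)
  have outer: "integral {c..d} (\<lambda>y. integral {a..b} (\<lambda>x. complex_of_real (h (x, y)) * e1 x * e2 y))
      = Eb * integral {c..d} (\<lambda>y. complex_of_real (h (b, y)) * e2 y)
        - Ea * integral {c..d} (\<lambda>y. complex_of_real (h (a, y)) * e2 y)
        - integral {c..d} (\<lambda>y. P y * e2 y) / c1"
  proof -
    have "integral {c..d} (\<lambda>y. integral {a..b} (\<lambda>x. complex_of_real (h (x, y)) * e1 x * e2 y))
       = integral {c..d} (\<lambda>y. (Eb * (complex_of_real (h (b, y)) * e2 y) - Ea * (complex_of_real (h (a, y)) * e2 y))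
            - P y * e2 y / c1)"
      unfolding inner by (rule integral_cong) (simp add: algebra_simps)
    also have "\<dots> = integral {c..d} (\<lambda>y. Eb * (complex_of_real (h (b, y)) * e2 y) - Ea * (complex_of_real (h (a, y)) * e2 y))
            - integral {c..d} (\<lambda>y. P y * e2 y / c1)"
      by (rule integral_diff) (intro integrable_diff integrable_on_mult_right iA, rule integrable_on_divide[OF iP])
    also have "integral {c..d} (\<lambda>y. Eb * (complex_of_real (h (b, y)) * e2 y) - Ea * (complex_of_real (h (a, y)) * e2 y))
        = Eb * integral {c..d} (\<lambda>y. complex_of_real (h (b, y)) * e2 y) - Ea * integral {c..d} (\<lambda>y. complex_of_real (h (a, y)) * e2 y)"
      by (subst integral_diff) (intro integrable_on_mult_right iA, intro integrable_on_mult_right iA, simp)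
    finally show ?thesis by simp
  qed
  define K0 where "K0 = (2 * real N + 4) * C"
  have K00: "0 \<le> K0" using C0 by (simp add: K0_def)
  have n0: "n > 0" using n by simp
  have bnd_edge: "norm (integral {c..d} (\<lambda>y. complex_of_real (h (z, y)) * e2 y)) \<le> K0 / n / \<bar>k2\<bar>"
    if z: "z \<in> {a..b}" for z
  proof -
    have nz: "n \<le> \<bar>z\<bar>" using ax z by auto
    have M: "\<forall>t\<in>{c..d}. \<bar>h (z, t)\<bar> \<le> C / n"
    proof
      fix t :: real assume "t \<in> {c..d}"
      have "n \<le> norm (z, t)" using nz norm_pair_ge1[of z t] by linarith
      then have le1: "\<bar>h (z, t)\<bar> \<le> C / norm (z, t)" using bh n by simp
      have pos: "0 < norm (z, t) * n" using \<open>n \<le> norm (z, t)\<close> n0 by (metis less_le_trans mult_pos_pos)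
      have "C / norm (z, t) \<le> C / n" using \<open>n \<le> norm (z, t)\<close> C0 n0 pos by (intro divide_left_mono) auto
      then show "\<bar>h (z, t)\<bar> \<le> C / n" using le1 by linarith
    qed
    have "norm (integral {c..d} (\<lambda>y. complex_of_real (h (z, y)) * e2 y)) \<le> (2 * real N + 4) * (C / n) / \<bar>k2\<bar>"
      unfolding e2_def
      by (rule osc[OF dy lin(2)[OF chy] conjunct1[OF zy] conjunct2[OF zy] k2 M]) (use C0 n0 in simp)
    then show ?thesis by (simp add: K0_def)
  qed
  have bnd_P: "norm (P y) \<le> K0 * (1 / (n\<^sup>2 + y\<^sup>2)) / \<bar>k1\<bar>" for y
  proof -
    have M: "\<forall>x\<in>{a..b}. \<bar>hx (x, y)\<bar> \<le> C / (n\<^sup>2 + y\<^sup>2)"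
    proof
      fix x assume x: "x \<in> {a..b}"
      have nx: "n \<le> \<bar>x\<bar>" using ax x by auto
      have "n \<le> norm (x, y)" using nx norm_pair_ge1[of x y] by linarith
      then have "\<bar>hx (x, y)\<bar> \<le> C / (norm (x, y))\<^sup>2" using bhx n by simp
      also have "\<dots> = C / (x\<^sup>2 + y\<^sup>2)" by (simp add: norm_pair_sq)
      also have "\<dots> \<le> C / (n\<^sup>2 + y\<^sup>2)"
      proof -
        have "n\<^sup>2 \<le> x\<^sup>2" using nx n0 by (metis abs_le_square_iff abs_of_pos)
        moreover have "0 < n\<^sup>2 + y\<^sup>2" using n0 by (intro add_pos_nonneg) auto
        moreover have "0 < x\<^sup>2 + y\<^sup>2" using n0 \<open>n\<^sup>2 \<le> x\<^sup>2\<close> by (smt (verit) zero_le_power2 zero_less_power)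
        ultimately show ?thesis using C0 by (intro divide_left_mono) auto
      qed
      finally show "\<bar>hx (x, y)\<bar> \<le> C / (n\<^sup>2 + y\<^sup>2)" .
    qed
    have "norm (P y) \<le> (2 * real N + 4) * (C / (n\<^sup>2 + y\<^sup>2)) / \<bar>k1\<bar>"
      unfolding P_def e1_def
      by (rule osc[OF dxx lin(1)[OF chxx] conjunct1[OF zx] conjunct2[OF zx] k1 M]) (use C0 n0 in \<open>auto intro: add_pos_nonneg\<close>)
    then show ?thesis by (simp add: K0_def)
  qed
  have ii: "(\<lambda>y. 1 / (n\<^sup>2 + y\<^sup>2)) integrable_on {c..d}"
  proof (rule integrable_continuous_interval)
    have "\<forall>y. n\<^sup>2 + y\<^sup>2 \<noteq> 0" using n0 by (metis add_pos_nonneg zero_le_power2 zero_less_power less_irrefl)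
    then show "continuous_on {c..d} (\<lambda>y. 1 / (n\<^sup>2 + y\<^sup>2))" by (intro continuous_intros) auto
  qed
  have bnd3: "norm (integral {c..d} (\<lambda>y. P y * e2 y)) \<le> K0 / \<bar>k1\<bar> * (pi / n)"
  proof -
    have "norm (integral {c..d} (\<lambda>y. P y * e2 y)) \<le> integral {c..d} (\<lambda>y. K0 / \<bar>k1\<bar> * (1 / (n\<^sup>2 + y\<^sup>2)))"
      by (rule integral_norm_bound_integral[OF iP])
        (use integrable_on_mult_right[OF ii, of "K0 / \<bar>k1\<bar>"] bnd_P in \<open>auto simp: norm_mult e2_def mult.commute\<close>)
    also have "\<dots> = K0 / \<bar>k1\<bar> * integral {c..d} (\<lambda>y. 1 / (n\<^sup>2 + y\<^sup>2))" by (rule integral_mult_right)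
    also have "\<dots> \<le> K0 / \<bar>k1\<bar> * (pi / n)"
      using int_inv_sq[OF n0, of c d] K00 by (intro mult_left_mono) auto
    finally show ?thesis .
  qed
  have "norm (integral {c..d} (\<lambda>y. integral {a..b} (\<lambda>x. complex_of_real (h (x, y)) * e1 x * e2 y)))
      \<le> norm Eb * (K0 / n / \<bar>k2\<bar>) + norm Ea * (K0 / n / \<bar>k2\<bar>) + K0 / \<bar>k1\<bar> * (pi / n) / \<bar>k1\<bar>"
  proof -
    have t1: "norm (Eb * integral {c..d} (\<lambda>y. complex_of_real (h (b, y)) * e2 y)) \<le> norm Eb * (K0 / n / \<bar>k2\<bar>)"
      unfolding norm_mult by (intro mult_left_mono bnd_edge) (use ab in auto)
    have t2: "norm (Ea * integral {c..d} (\<lambda>y. complex_of_real (h (a, y)) * e2 y)) \<le> norm Ea * (K0 / n / \<bar>k2\<bar>)"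
      unfolding norm_mult by (intro mult_left_mono bnd_edge) (use ab in auto)
    have t3: "norm (integral {c..d} (\<lambda>y. P y * e2 y) / c1) \<le> K0 / \<bar>k1\<bar> * (pi / n) / \<bar>k1\<bar>"
      unfolding norm_divide nc1 using divide_right_mono[OF bnd3, of "\<bar>k1\<bar>"] k1 by simp
    show ?thesis unfolding outer
      using norm_triangle_ineq4[of "Eb * integral {c..d} (\<lambda>y. complex_of_real (h (b, y)) * e2 y)"
          "Ea * integral {c..d} (\<lambda>y. complex_of_real (h (a, y)) * e2 y)"]
        norm_triangle_ineq4[of "Eb * integral {c..d} (\<lambda>y. complex_of_real (h (b, y)) * e2 y)
          - Ea * integral {c..d} (\<lambda>y. complex_of_real (h (a, y)) * e2 y)" "integral {c..d} (\<lambda>y. P y * e2 y) / c1"]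
        t1 t2 t3 by linarith
  qed
  also have "\<dots> = K0 * (2 / (\<bar>k1\<bar> * \<bar>k2\<bar>) + pi / k1\<^sup>2) / n"
    unfolding nEa nEb using k1 k2 n0 by (simp add: field_simps power2_eq_square)
  finally show ?thesis unfolding K0_def e1_def e2_def .
qed



lemma split3:
  fixes \<psi> :: "real \<Rightarrow> complex"
  assumes c: "continuous_on UNIV \<psi>" and r: "0 \<le> r" "r \<le> r'"
  shows "integral {-r'..r'} \<psi> - integral {-r..r} \<psi> = integral {-r'..-r} \<psi> + integral {r..r'} \<psi>"
proof -
  have i: "\<psi> integrable_on {a..b}" for a b
    by (rule integrable_continuous_interval) (rule continuous_on_subset[OF c], simp)
  have "integral {-r'..r} \<psi> + integral {r..r'} \<psi> = integral {-r'..r'} \<psi>"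
    using r by (intro Henstock_Kurzweil_Integration.integral_combine i) auto
  moreover have "integral {-r'..-r} \<psi> + integral {-r..r} \<psi> = integral {-r'..r} \<psi>"
    using r by (intro Henstock_Kurzweil_Integration.integral_combine i) auto
  ultimately show ?thesis by (simp add: algebra_simps)
qed

lemma swap_rect:
  fixes \<Phi> :: "real \<Rightarrow> real \<Rightarrow> complex"
  assumes "continuous_on UNIV (\<lambda>(x, y). \<Phi> x y)"
  shows "integral {c..d} (\<lambda>y. integral {a..b} (\<lambda>x. \<Phi> x y)) = integral {a..b} (\<lambda>x. integral {c..d} (\<lambda>y. \<Phi> x y))"
proof -
  have "continuous_on (cbox (a, c) (b, d)) (\<lambda>(x, y). \<Phi> x y)"
    using assms continuous_on_subset by blast
  from integral_swap_continuous[OF this] show ?thesis by simp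
qed

lemma bound_tendsto:
  fixes \<phi> :: "real \<Rightarrow> 'a::real_normed_vector"
  assumes "\<forall>r>1. norm (\<phi> r - l) \<le> B / r"
  shows "(\<phi> \<longlongrightarrow> l) at_top"
proof -
  have "((\<lambda>r. \<phi> r - l) \<longlongrightarrow> 0) at_top"
  proof (rule Lim_null_comparison)
    show "\<forall>\<^sub>F r in at_top. norm (\<phi> r - l) \<le> B / r"
      using eventually_gt_at_top[of "1::real"] by (rule eventually_mono) (use assms in auto)
    show "((\<lambda>r. B / r) \<longlongrightarrow> 0) at_top"
      by (rule tendsto_divide_0[OF tendsto_const filterlim_at_top_imp_at_infinity[OF filterlim_ident]])
  qed
  then show ?thesis using Lim_null by blast
qed

lemma cauchy_tail:
  fixes \<phi> :: "real \<Rightarrow> 'a::banach"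
  assumes H: "\<And>r r'. 1 < r \<Longrightarrow> r \<le> r' \<Longrightarrow> norm (\<phi> r' - \<phi> r) \<le> B / r"
  shows "\<exists>l. (\<phi> \<longlongrightarrow> l) at_top \<and> (\<forall>r>1. norm (\<phi> r - l) \<le> B / r)"
proof -
  have B0: "0 \<le> B" using H[of 2 2] by simp
  define s where "s j = \<phi> (real j + 2)" for j :: nat
  have sb: "norm (s j - s i) \<le> B / (real i + 2)" if "i \<le> j" for i j
    unfolding s_def using H[of "real i + 2" "real j + 2"] that by simp
  have "Cauchy s"
  proof (rule CauchyI)
    fix e :: real assume e: "0 < e"
    obtain M :: nat where M: "B / e < real M" using reals_Archimedean2 by blast
    have Me: "B / (real M + 2) < e"
    proof -
      have "B < e * real M" using M e by (simp add: field_simps)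
      also have "\<dots> \<le> e * (real M + 2)" using e by simp
      finally show ?thesis by (simp add: field_simps)
    qed
    have "norm (s m - s n) < e" if "m \<ge> M" "n \<ge> M" for m n
    proof -
      have "B / (real (min m n) + 2) \<le> B / (real M + 2)"
        using that B0 by (intro divide_left_mono) auto
      moreover have "norm (s m - s n) \<le> B / (real (min m n) + 2)"
      proof (cases "n \<le> m")
        case True then show ?thesis using sb[of n m] by (simp add: min_def B0)
      next
        case False then show ?thesis using sb[of m n] by (simp add: min_def norm_minus_commute)
      qed
      ultimately show ?thesis using Me by linarith
    qed
    then show "\<exists>M. \<forall>m\<ge>M. \<forall>n\<ge>M. norm (s m - s n) < e" by blast
  qed
  then obtain l where l: "s \<longlonglongrightarrow> l" using Cauchy_convergent_iff convergent_def by blast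
  have bd: "norm (\<phi> r - l) \<le> B / r" if r: "r > 1" for r
  proof -
    have "(\<lambda>j. norm (\<phi> r - s j)) \<longlonglongrightarrow> norm (\<phi> r - l)"
      by (intro tendsto_intros l)
    moreover have "\<exists>N. \<forall>j\<ge>N. norm (\<phi> r - s j) \<le> B / r"
    proof -
      obtain N :: nat where N: "r < real N" using reals_Archimedean2 by blast
      have "norm (\<phi> r - s j) \<le> B / r" if "j \<ge> N" for j
        unfolding s_def using H[of r "real j + 2"] r N that by (simp add: norm_minus_commute)
      then show ?thesis by blast
    qed
    ultimately show ?thesis by (rule LIMSEQ_le_const2)
  qed
  then show ?thesis using bound_tendsto[of \<phi> l B] by blast
qed



lemma sm_cont: "smooth2 f \<Longrightarrow> g \<in> iter_partials f \<Longrightarrow> continuous_on UNIV g"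
  unfolding smooth2_def by blast

lemma sm_dx: "smooth2 f \<Longrightarrow> g \<in> iter_partials f \<Longrightarrow> ((\<lambda>s. g (s, y)) has_real_derivative pdx g (x, y)) (at x)"
  unfolding smooth2_def pdx_def by (simp add: DERIV_deriv_iff_real_differentiable)

lemma sm_dy: "smooth2 f \<Longrightarrow> g \<in> iter_partials f \<Longrightarrow> ((\<lambda>t. g (x, t)) has_real_derivative pdy g (x, y)) (at y)"
  unfolding smooth2_def pdy_def by (simp add: DERIV_deriv_iff_real_differentiable)

lemma normal_facts:
  assumes "normal f"
  obtains C N where "C > 0"
    "\<And>p. norm p > 1 \<Longrightarrow> \<bar>f p\<bar> \<le> C / norm p"
    "\<And>p. norm p > 1 \<Longrightarrow> \<bar>pdx f p\<bar> \<le> C / (norm p)\<^sup>2"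
    "\<And>p. norm p > 1 \<Longrightarrow> \<bar>pdy f p\<bar> \<le> C / (norm p)\<^sup>2"
    "\<And>y. finite {x. pdx f (x, y) = 0} \<and> card {x. pdx f (x, y) = 0} \<le> N"
    "\<And>y. finite {x. pdx (pdx f) (x, y) = 0} \<and> card {x. pdx (pdx f) (x, y) = 0} \<le> N"
    "\<And>x. finite {y. pdy f (x, y) = 0} \<and> card {y. pdy f (x, y) = 0} \<le> N"
    "\<And>x. finite {y. pdy (pdy f) (x, y) = 0} \<and> card {y. pdy (pdy f) (x, y) = 0} \<le> N"
proof -
  from assms obtain C1 C2 C3 N where
    C1: "C1 > 0" "\<forall>p. norm p > 1 \<longrightarrow> \<bar>f p\<bar> \<le> C1 / norm p" and
    C2: "C2 > 0" "\<forall>p. norm p > 1 \<longrightarrow> \<bar>pdx f p\<bar> \<le> C2 / (norm p)\<^sup>2" and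
    C3: "C3 > 0" "\<forall>p. norm p > 1 \<longrightarrow> \<bar>pdy f p\<bar> \<le> C3 / (norm p)\<^sup>2" and
    Z1: "\<forall>x. zeros_bounded N (\<lambda>y. f (x, y)) \<and>
               zeros_bounded N (deriv (\<lambda>y. f (x, y))) \<and>
               zeros_bounded N (deriv (deriv (\<lambda>y. f (x, y))))" and
    Z2: "\<forall>y. zeros_bounded N (\<lambda>x. f (x, y)) \<and>
               zeros_bounded N (deriv (\<lambda>x. f (x, y))) \<and>
               zeros_bounded N (deriv (deriv (\<lambda>x. f (x, y))))"
    unfolding normal_def very_moderate_decrease_def moderate_decrease_def by metis
  define C where "C = max C1 (max C2 C3)"
  have C0: "C > 0" using C1 by (simp add: C_def)
  have le: "A / q \<le> C / q" if "A \<le> C" "q > 0" for A q :: real using that by (simp add: divide_right_mono)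
  show ?thesis
  proof (rule that[OF C0])
    fix p :: "real \<times> real" assume p: "norm p > 1"
    have np: "norm p > 0" "(norm p)\<^sup>2 > 0" using p by auto
    have Cs: "C1 \<le> C" "C2 \<le> C" "C3 \<le> C" by (auto simp: C_def)
    show "\<bar>f p\<bar> \<le> C / norm p" using C1(2)[rule_format, OF p] le[OF Cs(1) np(1)] by linarith
    show "\<bar>pdx f p\<bar> \<le> C / (norm p)\<^sup>2" using C2(2)[rule_format, OF p] le[OF Cs(2) np(2)] by linarith
    show "\<bar>pdy f p\<bar> \<le> C / (norm p)\<^sup>2" using C3(2)[rule_format, OF p] le[OF Cs(3) np(2)] by linarith
  next
    fix y
    have e1: "{x. pdx f (x, y) = 0} = {t. deriv (\<lambda>x. f (x, y)) t = 0}" by (simp add: pdx_def)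
    have e2: "{x. pdx (pdx f) (x, y) = 0} = {t. deriv (deriv (\<lambda>x. f (x, y))) t = 0}" by (simp add: pdx_def)
    show "finite {x. pdx f (x, y) = 0} \<and> card {x. pdx f (x, y) = 0} \<le> N"
      using Z2 unfolding e1 zeros_bounded_def by blast
    show "finite {x. pdx (pdx f) (x, y) = 0} \<and> card {x. pdx (pdx f) (x, y) = 0} \<le> N"
      using Z2 unfolding e2 zeros_bounded_def by blast
  next
    fix x
    have e1: "{y. pdy f (x, y) = 0} = {t. deriv (\<lambda>y. f (x, y)) t = 0}" by (simp add: pdy_def)
    have e2: "{y. pdy (pdy f) (x, y) = 0} = {t. deriv (deriv (\<lambda>y. f (x, y))) t = 0}" by (simp add: pdy_def)
    show "finite {y. pdy f (x, y) = 0} \<and> card {y. pdy f (x, y) = 0} \<le> N"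
      using Z1 unfolding e1 zeros_bounded_def by blast
    show "finite {y. pdy (pdy f) (x, y) = 0} \<and> card {y. pdy (pdy f) (x, y) = 0} \<le> N"
      using Z1 unfolding e2 zeros_bounded_def by blast
  qed
qed



lemma rect_bounds:
  fixes f :: "real \<times> real \<Rightarrow> real" and k1 k2 :: real
  assumes S: "smooth2 f" and Nf: "normal f" and k1: "k1 \<noteq> 0" and k2: "k2 \<noteq> 0"
  obtains C N where "C > 0"
    "\<And>a b c d n. n > 1 \<Longrightarrow> \<forall>x\<in>{a..b}. n \<le> \<bar>x\<bar> \<Longrightarrow>
       norm (integral {c..d} (\<lambda>y. integral {a..b} (\<lambda>x. complex_of_real (f (x, y))
            * exp (- \<i> * of_real k1 * of_real x) * exp (- \<i> * of_real k2 * of_real y))))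
         \<le> (2 * real N + 4) * C * (2 / (\<bar>k1\<bar> * \<bar>k2\<bar>) + pi / k1\<^sup>2) / n"
    "\<And>a b c d n. n > 1 \<Longrightarrow> \<forall>y\<in>{a..b}. n \<le> \<bar>y\<bar> \<Longrightarrow>
       norm (integral {c..d} (\<lambda>x. integral {a..b} (\<lambda>y. complex_of_real (f (x, y))
            * exp (- \<i> * of_real k1 * of_real x) * exp (- \<i> * of_real k2 * of_real y))))
         \<le> (2 * real N + 4) * C * (2 / (\<bar>k2\<bar> * \<bar>k1\<bar>) + pi / k2\<^sup>2) / n"
    "\<And>y a b M. \<forall>x\<in>{a..b}. 1 < \<bar>x\<bar> \<Longrightarrow> (\<forall>x\<in>{a..b}. M \<le> \<bar>x\<bar>) \<Longrightarrow> 0 < M \<Longrightarrow>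
       norm (integral {a..b} (\<lambda>x. complex_of_real (f (x, y)) * exp (- \<i> * of_real k1 * of_real x)))
         \<le> (2 * real N + 4) * (C / M) / \<bar>k1\<bar>"
    "\<And>x a b M. \<forall>y\<in>{a..b}. 1 < \<bar>y\<bar> \<Longrightarrow> (\<forall>y\<in>{a..b}. M \<le> \<bar>y\<bar>) \<Longrightarrow> 0 < M \<Longrightarrow>
       norm (integral {a..b} (\<lambda>y. complex_of_real (f (x, y)) * exp (- \<i> * of_real k2 * of_real y)))
         \<le> (2 * real N + 4) * (C / M) / \<bar>k2\<bar>"
proof -
  obtain C N where C0: "C > 0"
    and bf: "\<And>p. norm p > 1 \<Longrightarrow> \<bar>f p\<bar> \<le> C / norm p"
    and bfx: "\<And>p. norm p > 1 \<Longrightarrow> \<bar>pdx f p\<bar> \<le> C / (norm p)\<^sup>2"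
    and bfy: "\<And>p. norm p > 1 \<Longrightarrow> \<bar>pdy f p\<bar> \<le> C / (norm p)\<^sup>2"
    and zx1: "\<And>y. finite {x. pdx f (x, y) = 0} \<and> card {x. pdx f (x, y) = 0} \<le> N"
    and zx2: "\<And>y. finite {x. pdx (pdx f) (x, y) = 0} \<and> card {x. pdx (pdx f) (x, y) = 0} \<le> N"
    and zy1: "\<And>x. finite {y. pdy f (x, y) = 0} \<and> card {y. pdy f (x, y) = 0} \<le> N"
    and zy2: "\<And>x. finite {y. pdy (pdy f) (x, y) = 0} \<and> card {y. pdy (pdy f) (x, y) = 0} \<le> N"
    using normal_facts[OF Nf] by metis
  have ip: "f \<in> iter_partials f" "pdx f \<in> iter_partials f" "pdx (pdx f) \<in> iter_partials f"
     "pdy f \<in> iter_partials f" "pdy (pdy f) \<in> iter_partials f"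
    by (auto intro: iter_partials.intros)
  note cs = sm_cont[OF S ip(1)] sm_cont[OF S ip(2)] sm_cont[OF S ip(3)] sm_cont[OF S ip(4)] sm_cont[OF S ip(5)]
  have dfx: "\<And>x y. ((\<lambda>s. f (s, y)) has_real_derivative pdx f (x, y)) (at x)" using sm_dx[OF S ip(1)] .
  have dfxx: "\<And>x y. ((\<lambda>s. pdx f (s, y)) has_real_derivative pdx (pdx f) (x, y)) (at x)" using sm_dx[OF S ip(2)] .
  have dfy: "\<And>x y. ((\<lambda>t. f (x, t)) has_real_derivative pdy f (x, y)) (at y)" using sm_dy[OF S ip(1)] .
  have dfyy: "\<And>x y. ((\<lambda>t. pdy f (x, t)) has_real_derivative pdy (pdy f) (x, y)) (at y)" using sm_dy[OF S ip(4)] .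
  have sw: "continuous_on UNIV (\<lambda>p. g (snd p, fst p))" if "continuous_on UNIV g" for g :: "real \<times> real \<Rightarrow> real"
    by (rule continuous_on_compose2[OF that]) (auto intro!: continuous_intros)
  have nsw: "norm (snd p, fst p) = norm p" for p :: "real \<times> real"
    by (cases p) (simp add: norm_Pair add.commute)
  show ?thesis
  proof (rule that[OF C0])
    fix a b c d n :: real assume n: "n > 1" and ax: "\<forall>x\<in>{a..b}. n \<le> \<bar>x\<bar>"
    show "norm (integral {c..d} (\<lambda>y. integral {a..b} (\<lambda>x. complex_of_real (f (x, y))
            * exp (- \<i> * of_real k1 * of_real x) * exp (- \<i> * of_real k2 * of_real y))))
         \<le> (2 * real N + 4) * C * (2 / (\<bar>k1\<bar> * \<bar>k2\<bar>) + pi / k1\<^sup>2) / n"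
      by (rule KE[OF cs(1) cs(2) cs(3) cs(4) dfx dfxx dfy zx2 zy1 bf bfx _ k1 k2 n ax]) (use C0 in auto)
  next
    fix a b c d n :: real assume n: "n > 1" and ay: "\<forall>y\<in>{a..b}. n \<le> \<bar>y\<bar>"
    have "norm (integral {c..d} (\<lambda>y. integral {a..b} (\<lambda>x. complex_of_real ((\<lambda>p. f (snd p, fst p)) (x, y))
            * exp (- \<i> * of_real k2 * of_real x) * exp (- \<i> * of_real k1 * of_real y))))
         \<le> (2 * real N + 4) * C * (2 / (\<bar>k2\<bar> * \<bar>k1\<bar>) + pi / k2\<^sup>2) / n"
    proof -
      have bfs: "\<bar>f (snd p, fst p)\<bar> \<le> C / norm p" if "norm p > 1" for p :: "real \<times> real"
        using bf[of "(snd p, fst p)"] nsw[of p] that by simp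
      have bfys: "\<bar>pdy f (snd p, fst p)\<bar> \<le> C / (norm p)\<^sup>2" if "norm p > 1" for p :: "real \<times> real"
        using bfy[of "(snd p, fst p)"] nsw[of p] that by simp
      show ?thesis
      by (rule KE[OF sw[OF cs(1)] sw[OF cs(4)] sw[OF cs(5)] sw[OF cs(2)] _ _ _ _ _ bfs bfys])
         (use dfy dfyy dfx zy2 zx1 C0 k1 k2 n ay in auto)
    qed
    then show "norm (integral {c..d} (\<lambda>x. integral {a..b} (\<lambda>y. complex_of_real (f (x, y))
            * exp (- \<i> * of_real k1 * of_real x) * exp (- \<i> * of_real k2 * of_real y))))
         \<le> (2 * real N + 4) * C * (2 / (\<bar>k2\<bar> * \<bar>k1\<bar>) + pi / k2\<^sup>2) / n"
      by (simp add: mult_ac)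
  next
    fix y a b M :: real assume a1: "\<forall>x\<in>{a..b}. 1 < \<bar>x\<bar>" and aM: "\<forall>x\<in>{a..b}. M \<le> \<bar>x\<bar>" and M: "0 < M"
    have B: "\<forall>t\<in>{a..b}. \<bar>f (t, y)\<bar> \<le> C / M"
    proof
      fix t assume t: "t \<in> {a..b}"
      have "1 < norm (t, y)" "M \<le> norm (t, y)" using a1 aM t norm_pair_ge1[of t y] by force+
      moreover have "0 < norm (t, y) * M" using M \<open>1 < norm (t, y)\<close> by (metis less_trans zero_less_one mult_pos_pos)
      ultimately have "\<bar>f (t, y)\<bar> \<le> C / norm (t, y)" "C / norm (t, y) \<le> C / M"
        using bf C0 M by (auto intro!: divide_left_mono)
      then show "\<bar>f (t, y)\<bar> \<le> C / M" by linarith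
    qed
    show "norm (integral {a..b} (\<lambda>x. complex_of_real (f (x, y)) * exp (- \<i> * of_real k1 * of_real x)))
         \<le> (2 * real N + 4) * (C / M) / \<bar>k1\<bar>"
      by (rule osc[OF dfx continuous_on_compose2[OF cs(2)] conjunct1[OF zx1] conjunct2[OF zx1] k1 B])
        (use C0 M in \<open>auto intro!: continuous_intros\<close>)
  next
    fix x a b M :: real assume a1: "\<forall>y\<in>{a..b}. 1 < \<bar>y\<bar>" and aM: "\<forall>y\<in>{a..b}. M \<le> \<bar>y\<bar>" and M: "0 < M"
    have B: "\<forall>t\<in>{a..b}. \<bar>f (x, t)\<bar> \<le> C / M"
    proof
      fix t assume t: "t \<in> {a..b}"
      have "1 < norm (x, t)" "M \<le> norm (x, t)" using a1 aM t norm_pair_ge2[of t x] by force+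
      moreover have "0 < norm (x, t) * M" using M \<open>1 < norm (x, t)\<close> by (metis less_trans zero_less_one mult_pos_pos)
      ultimately have "\<bar>f (x, t)\<bar> \<le> C / norm (x, t)" "C / norm (x, t) \<le> C / M"
        using bf C0 M by (auto intro!: divide_left_mono)
      then show "\<bar>f (x, t)\<bar> \<le> C / M" by linarith
    qed
    show "norm (integral {a..b} (\<lambda>y. complex_of_real (f (x, y)) * exp (- \<i> * of_real k2 * of_real y)))
         \<le> (2 * real N + 4) * (C / M) / \<bar>k2\<bar>"
      by (rule osc[OF dfy continuous_on_compose2[OF cs(4)] conjunct1[OF zy1] conjunct2[OF zy1] k2 B])
        (use C0 M in \<open>auto intro!: continuous_intros\<close>)
  qed
qed



lemma small_div: "0 < e \<Longrightarrow> B / e < n \<Longrightarrow> 0 < n \<Longrightarrow> B / n \<le> (e::real)"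
  by (simp add: field_simps)

lemma int_bound_const:
  fixes g :: "real \<Rightarrow> complex"
  assumes "g integrable_on {a..b}" "a \<le> b" "0 \<le> B" "\<And>t. t \<in> {a..b} \<Longrightarrow> norm (g t) \<le> B"
  shows "norm (integral {a..b} g) \<le> B * (b - a)"
  using has_integral_bound[of B g "integral {a..b} g" a b] assms by (simp add: integrable_integral)

lemma tri2: "norm (a::'a::real_normed_vector) \<le> x \<Longrightarrow> norm b \<le> x \<Longrightarrow> norm (a + b) \<le> 2 * x"
  using norm_triangle_ineq[of a b] by linarith

theorem lemma12:
  fixes f :: "real \<times> real \<Rightarrow> real" and k1 k2 :: real
  assumes "smooth2 f" and "normal f" and "k1 \<noteq> 0" and "k2 \<noteq> 0"
  shows "\<exists>(F :: real \<Rightarrow> complex) (G :: real \<Rightarrow> complex) (L :: complex).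
     (\<forall>y. ((\<lambda>r. integral {-r..r}
              (\<lambda>x. complex_of_real (f (x, y)) * exp (- \<i> * of_real k1 * of_real x)))
            \<longlongrightarrow> F y) at_top) \<and>
     (\<forall>x. ((\<lambda>r. integral {-r..r}
              (\<lambda>y. complex_of_real (f (x, y)) * exp (- \<i> * of_real k2 * of_real y)))
            \<longlongrightarrow> G x) at_top) \<and>
     (\<forall>r. (\<lambda>y. F y * exp (- \<i> * of_real k2 * of_real y)) integrable_on {-r..r}) \<and>
     (\<forall>r. (\<lambda>x. G x * exp (- \<i> * of_real k1 * of_real x)) integrable_on {-r..r}) \<and>
     ((\<lambda>r. integral {-r..r} (\<lambda>y. F y * exp (- \<i> * of_real k2 * of_real y)))
        \<longlongrightarrow> L) at_top \<and>
     ((\<lambda>r. integral {-r..r} (\<lambda>x. G x * exp (- \<i> * of_real k1 * of_real x)))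
        \<longlongrightarrow> L) at_top \<and>
     ((\<lambda>(m, n). integral {-m..m} (\<lambda>y. integral {-n..n}
          (\<lambda>x. complex_of_real (f (x, y)) * exp (- \<i> * of_real k1 * of_real x)
                 * exp (- \<i> * of_real k2 * of_real y))))
        \<longlongrightarrow> L) (at_top \<times>\<^sub>F at_top)"
proof -
  note S = assms(1) and Nf = assms(2) and k1 = assms(3) and k2 = assms(4)
  obtain C N where C0: "C > 0"
    and RX0: "\<And>a b c d n. n > 1 \<Longrightarrow> \<forall>x\<in>{a..b}. n \<le> \<bar>x\<bar> \<Longrightarrow>
       norm (integral {c..d} (\<lambda>y. integral {a..b} (\<lambda>x. complex_of_real (f (x, y))
            * exp (- \<i> * of_real k1 * of_real x) * exp (- \<i> * of_real k2 * of_real y))))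
         \<le> (2 * real N + 4) * C * (2 / (\<bar>k1\<bar> * \<bar>k2\<bar>) + pi / k1\<^sup>2) / n"
    and RY0: "\<And>a b c d n. n > 1 \<Longrightarrow> \<forall>y\<in>{a..b}. n \<le> \<bar>y\<bar> \<Longrightarrow>
       norm (integral {c..d} (\<lambda>x. integral {a..b} (\<lambda>y. complex_of_real (f (x, y))
            * exp (- \<i> * of_real k1 * of_real x) * exp (- \<i> * of_real k2 * of_real y))))
         \<le> (2 * real N + 4) * C * (2 / (\<bar>k2\<bar> * \<bar>k1\<bar>) + pi / k2\<^sup>2) / n"
    and OX0: "\<And>y a b M. \<forall>x\<in>{a..b}. 1 < \<bar>x\<bar> \<Longrightarrow> (\<forall>x\<in>{a..b}. M \<le> \<bar>x\<bar>) \<Longrightarrow> 0 < M \<Longrightarrow>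
       norm (integral {a..b} (\<lambda>x. complex_of_real (f (x, y)) * exp (- \<i> * of_real k1 * of_real x)))
         \<le> (2 * real N + 4) * (C / M) / \<bar>k1\<bar>"
    and OY0: "\<And>x a b M. \<forall>y\<in>{a..b}. 1 < \<bar>y\<bar> \<Longrightarrow> (\<forall>y\<in>{a..b}. M \<le> \<bar>y\<bar>) \<Longrightarrow> 0 < M \<Longrightarrow>
       norm (integral {a..b} (\<lambda>y. complex_of_real (f (x, y)) * exp (- \<i> * of_real k2 * of_real y)))
         \<le> (2 * real N + 4) * (C / M) / \<bar>k2\<bar>"
    by (rule rect_bounds[OF S Nf k1 k2], rule that, assumption+)
  define e1 where "e1 = (\<lambda>x::real. exp (- \<i> * of_real k1 * of_real x))"
  define e2 where "e2 = (\<lambda>y::real. exp (- \<i> * of_real k2 * of_real y))"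
  define \<Phi> where "\<Phi> = (\<lambda>x y. complex_of_real (f (x, y)) * e1 x * e2 y)"
  define I where "I = (\<lambda>m n. integral {-m..m} (\<lambda>y. integral {-n..n} (\<lambda>x. \<Phi> x y)))"
  define KX where "KX = (2 * real N + 4) * C * (2 / (\<bar>k1\<bar> * \<bar>k2\<bar>) + pi / k1\<^sup>2)"
  define KY where "KY = (2 * real N + 4) * C * (2 / (\<bar>k2\<bar> * \<bar>k1\<bar>) + pi / k2\<^sup>2)"
  have KX0: "KX \<ge> 0" unfolding KX_def using C0 by (intro mult_nonneg_nonneg add_nonneg_nonneg) auto
  have KY0: "KY \<ge> 0" unfolding KY_def using C0 by (intro mult_nonneg_nonneg add_nonneg_nonneg) auto
  have RX: "\<And>a b c d n. n > 1 \<Longrightarrow> \<forall>x\<in>{a..b}. n \<le> \<bar>x\<bar> \<Longrightarrow>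
       norm (integral {c..d} (\<lambda>y. integral {a..b} (\<lambda>x. \<Phi> x y))) \<le> KX / n"
    unfolding \<Phi>_def e1_def e2_def KX_def by (fact RX0)
  have RY: "\<And>a b c d n. n > 1 \<Longrightarrow> \<forall>y\<in>{a..b}. n \<le> \<bar>y\<bar> \<Longrightarrow>
       norm (integral {c..d} (\<lambda>x. integral {a..b} (\<lambda>y. \<Phi> x y))) \<le> KY / n"
    unfolding \<Phi>_def e1_def e2_def KY_def by (fact RY0)
  have cf: "continuous_on UNIV f" by (rule sm_cont[OF S iter_partials.base])
  have ce1: "continuous_on UNIV e1" unfolding e1_def by (intro continuous_intros)
  have ce2: "continuous_on UNIV e2" unfolding e2_def by (intro continuous_intros)
  have cP: "continuous_on UNIV (\<lambda>p. \<Phi> (fst p) (snd p))"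
    unfolding \<Phi>_def
    by (intro continuous_intros continuous_on_compose2[OF cf] continuous_on_compose2[OF ce1]
        continuous_on_compose2[OF ce2]) auto
  have c\<Phi>: "continuous_on UNIV (\<lambda>(x, y). \<Phi> x y)" using cP by (simp add: case_prod_beta)
  have c\<Phi>': "continuous_on UNIV (\<lambda>(x, y). \<Phi> y x)"
  proof -
    have "continuous_on UNIV (\<lambda>p. \<Phi> (snd p) (fst p))"
      using continuous_on_compose2[OF cP, of UNIV prod.swap] by (simp add: continuous_on_swap)
    then show ?thesis by (simp add: case_prod_beta)
  qed
  have cx: "continuous_on UNIV (\<lambda>x. \<Phi> x y)" for y
    using continuous_on_compose2[OF cP, of UNIV "\<lambda>x. (x, y)"] by (simp add: continuous_on_Pair continuous_on_id continuous_on_const)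
  have cJ: "continuous_on UNIV (\<lambda>y. integral {a..b} (\<lambda>x. \<Phi> x y))" for a b
    by (rule cont_param[OF c\<Phi>])
  have cJ': "continuous_on UNIV (\<lambda>x. integral {a..b} (\<lambda>y. \<Phi> x y))" for a b
    by (rule cont_param[OF c\<Phi>'])
  have iJ: "(\<lambda>y. integral {a..b} (\<lambda>x. \<Phi> x y)) integrable_on {c..d}" for a b c d
    by (rule integrable_continuous_interval) (rule continuous_on_subset[OF cJ], simp)
  have E1: "norm (I m n' - I m n) \<le> 2 * (KX / n)" if n: "1 < n" "n \<le> n'" for m n n'
  proof -
    have "I m n' - I m n = integral {-m..m} (\<lambda>y. integral {-n'..n'} (\<lambda>x. \<Phi> x y) - integral {-n..n} (\<lambda>x. \<Phi> x y))"
      unfolding I_def by (rule integral_diff[symmetric, OF iJ iJ])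
    also have "\<dots> = integral {-m..m} (\<lambda>y. integral {-n'..-n} (\<lambda>x. \<Phi> x y) + integral {n..n'} (\<lambda>x. \<Phi> x y))"
      by (rule integral_cong) (rule split3[OF cx], use n in auto)
    also have "\<dots> = integral {-m..m} (\<lambda>y. integral {-n'..-n} (\<lambda>x. \<Phi> x y)) + integral {-m..m} (\<lambda>y. integral {n..n'} (\<lambda>x. \<Phi> x y))"
      by (rule integral_add[OF iJ iJ])
    finally have eq: "I m n' - I m n = \<dots>" .
    have "norm (integral {-m..m} (\<lambda>y. integral {-n'..-n} (\<lambda>x. \<Phi> x y))) \<le> KX / n"
      by (rule RX) (use n in auto)
    moreover have "norm (integral {-m..m} (\<lambda>y. integral {n..n'} (\<lambda>x. \<Phi> x y))) \<le> KX / n"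
      by (rule RX) (use n in auto)
    ultimately show ?thesis unfolding eq by (rule tri2)
  qed
  have E2: "norm (I m' n - I m n) \<le> 2 * (KY / m)" if m: "1 < m" "m \<le> m'" for m m' n
  proof -
    have "I m' n - I m n = integral {-m'..-m} (\<lambda>y. integral {-n..n} (\<lambda>x. \<Phi> x y)) + integral {m..m'} (\<lambda>y. integral {-n..n} (\<lambda>x. \<Phi> x y))"
      unfolding I_def by (rule split3[OF cJ]) (use m in auto)
    also have "\<dots> = integral {-n..n} (\<lambda>x. integral {-m'..-m} (\<lambda>y. \<Phi> x y)) + integral {-n..n} (\<lambda>x. integral {m..m'} (\<lambda>y. \<Phi> x y))"
      by (simp only: swap_rect[OF c\<Phi>, of "-m'" "-m" "-n" n] swap_rect[OF c\<Phi>, of m m' "-n" n])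
    finally have eq: "I m' n - I m n = \<dots>" .
    have "norm (integral {-n..n} (\<lambda>x. integral {-m'..-m} (\<lambda>y. \<Phi> x y))) \<le> KY / m"
      by (rule RY) (use m in auto)
    moreover have "norm (integral {-n..n} (\<lambda>x. integral {m..m'} (\<lambda>y. \<Phi> x y))) \<le> KY / m"
      by (rule RY) (use m in auto)
    ultimately show ?thesis unfolding eq by (rule tri2)
  qed
  have Dd: "norm (I r' r' - I r r) \<le> (2 * KX + 2 * KY) / r" if r: "1 < r" "r \<le> r'" for r r'
  proof -
    have "norm (I r' r' - I r r) \<le> norm (I r' r' - I r' r) + norm (I r' r - I r r)"
      using norm_triangle_ineq[of "I r' r' - I r' r" "I r' r - I r r"] by simp
    moreover have "norm (I r' r' - I r' r) \<le> 2 * (KX / r)" by (rule E1) (use r in auto)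
    moreover have "norm (I r' r - I r r) \<le> 2 * (KY / r)" by (rule E2) (use r in auto)
    moreover have "2 * (KX / r) + 2 * (KY / r) = (2 * KX + 2 * KY) / r" by (simp add: add_divide_distrib)
    ultimately show ?thesis by linarith
  qed
  obtain L where Lb: "\<forall>r>1. norm (I r r - L) \<le> (2 * KX + 2 * KY) / r"
    using cauchy_tail[OF Dd] by blast
  define Dg where "Dg = 4 * KX + 4 * KY"
  have DB: "norm (I m n - L) \<le> Dg / m + Dg / n" if mn: "1 < m" "1 < n" for m n
  proof -
    define s where "s = max m n"
    have s: "1 < s" "m \<le> s" "n \<le> s" using mn by (auto simp: s_def)
    have a1: "norm (I m s - I m n) \<le> 2 * (KX / n)" by (rule E1) (use mn s in auto)
    have a2: "norm (I s s - I m s) \<le> 2 * (KY / m)" by (rule E2) (use mn s in auto)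
    have a3: "norm (I s s - L) \<le> (2 * KX + 2 * KY) / s" using Lb s by auto
    have a4: "(2 * KX + 2 * KY) / s \<le> (2 * KX + 2 * KY) / m"
      using s mn KX0 KY0 by (intro divide_left_mono) auto
    have "norm (I m n - L) \<le> norm (I m s - I m n) + norm (I s s - I m s) + norm (I s s - L)"
    proof -
      have "norm (I m n - L) = norm ((I s s - L) - (I m s - I m n) - (I s s - I m s))"
        by (rule arg_cong[where f=norm]) (simp add: algebra_simps)
      then show ?thesis
        using norm_triangle_ineq4[of "(I s s - L) - (I m s - I m n)" "I s s - I m s"]
          norm_triangle_ineq4[of "I s s - L" "I m s - I m n"] by linarith
    qed
    moreover have "2 * (KX / n) \<le> Dg / n"
      using mn KX0 KY0 by (simp add: Dg_def divide_right_mono)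
    moreover have "2 * (KY / m) + (2 * KX + 2 * KY) / m \<le> Dg / m"
    proof -
      have "2 * (KY / m) + (2 * KX + 2 * KY) / m = (2 * KX + 4 * KY) / m" by (simp add: add_divide_distrib)
      also have "\<dots> \<le> Dg / m" using mn KX0 by (simp add: Dg_def divide_right_mono)
      finally show ?thesis .
    qed
    ultimately show ?thesis using a1 a2 a3 a4 by linarith
  qed
  have Dg0: "0 \<le> Dg" using KX0 KY0 by (simp add: Dg_def)
  have dl: "((\<lambda>p. I (fst p) (snd p)) \<longlongrightarrow> L) (at_top \<times>\<^sub>F at_top)"
  proof -
    have "((\<lambda>p. I (fst p) (snd p) - L) \<longlongrightarrow> 0) (at_top \<times>\<^sub>F at_top)"
    proof (rule Lim_null_comparison)
      show "\<forall>\<^sub>F p in at_top \<times>\<^sub>F at_top. norm (I (fst p) (snd p) - L) \<le> Dg / fst p + Dg / snd p"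
        unfolding eventually_prod_filter
        apply (rule exI[where x="\<lambda>x::real. 1 < x"], rule exI[where x="\<lambda>x::real. 1 < x"])
        using DB by (auto intro: eventually_gt_at_top)
      show "((\<lambda>p. Dg / fst p + Dg / snd p) \<longlongrightarrow> 0) (at_top \<times>\<^sub>F at_top)"
        using tendsto_add[OF tendsto_divide_0[OF tendsto_const filterlim_at_top_imp_at_infinity[OF filterlim_fst]]
            tendsto_divide_0[OF tendsto_const filterlim_at_top_imp_at_infinity[OF filterlim_snd]]] by simp
    qed
    then show ?thesis using Lim_null[of "\<lambda>p. I (fst p) (snd p)" L] by simp
  qed
  define \<phi> where "\<phi> = (\<lambda>y r. integral {-r..r} (\<lambda>x. complex_of_real (f (x, y)) * e1 x))"
  define \<psi> where "\<psi> = (\<lambda>x r. integral {-r..r} (\<lambda>y. complex_of_real (f (x, y)) * e2 y))"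
  define BF where "BF = 2 * ((2 * real N + 4) * C / \<bar>k1\<bar>)"
  define BG where "BG = 2 * ((2 * real N + 4) * C / \<bar>k2\<bar>)"
  have BF0: "0 \<le> BF" using C0 by (simp add: BF_def)
  have BG0: "0 \<le> BG" using C0 by (simp add: BG_def)
  have cA: "continuous_on UNIV (\<lambda>p. complex_of_real (f (fst p, snd p)) * e1 (fst p))"
    by (intro continuous_intros continuous_on_compose2[OF cf] continuous_on_compose2[OF ce1]) auto
  have cA2: "continuous_on UNIV (\<lambda>(x, y). complex_of_real (f (x, y)) * e1 x)"
    using cA by (simp add: case_prod_beta)
  have cB: "continuous_on UNIV (\<lambda>p. complex_of_real (f (snd p, fst p)) * e2 (fst p))"
    by (intro continuous_intros continuous_on_compose2[OF cf] continuous_on_compose2[OF ce2]) auto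
  have cB2: "continuous_on UNIV (\<lambda>(y, x). complex_of_real (f (x, y)) * e2 y)"
    using cB by (simp add: case_prod_beta)
  have cAx: "continuous_on UNIV (\<lambda>x. complex_of_real (f (x, y)) * e1 x)" for y
    using continuous_on_compose2[OF cA, of UNIV "\<lambda>x. (x, y)"] by (simp add: continuous_on_Pair continuous_on_id continuous_on_const)
  have cBy: "continuous_on UNIV (\<lambda>y. complex_of_real (f (x, y)) * e2 y)" for x
    using continuous_on_compose2[OF cB, of UNIV "\<lambda>y. (y, x)"] by (simp add: continuous_on_Pair continuous_on_id continuous_on_const)
  have c\<phi>: "continuous_on UNIV (\<lambda>y. \<phi> y n)" for n
    unfolding \<phi>_def using cont_param[OF cA2] by simp
  have c\<psi>: "continuous_on UNIV (\<lambda>x. \<psi> x m)" for m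
    unfolding \<psi>_def using cont_param[OF cB2] by simp
  have Fc: "norm (\<phi> y r' - \<phi> y r) \<le> BF / r" if r: "1 < r" "r \<le> r'" for y r r'
  proof -
    have eq: "\<phi> y r' - \<phi> y r = integral {-r'..-r} (\<lambda>x. complex_of_real (f (x, y)) * e1 x) + integral {r..r'} (\<lambda>x. complex_of_real (f (x, y)) * e1 x)"
      unfolding \<phi>_def by (rule split3[OF cAx]) (use r in auto)
    have b1: "norm (integral {-r'..-r} (\<lambda>x. complex_of_real (f (x, y)) * e1 x)) \<le> (2 * real N + 4) * (C / r) / \<bar>k1\<bar>"
      unfolding e1_def by (rule OX0) (use r in auto)
    have b2: "norm (integral {r..r'} (\<lambda>x. complex_of_real (f (x, y)) * e1 x)) \<le> (2 * real N + 4) * (C / r) / \<bar>k1\<bar>"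
      unfolding e1_def by (rule OX0) (use r in auto)
    have "norm (\<phi> y r' - \<phi> y r) \<le> 2 * ((2 * real N + 4) * (C / r) / \<bar>k1\<bar>)"
      unfolding eq by (rule tri2[OF b1 b2])
    also have "\<dots> = BF / r" by (simp add: BF_def)
    finally show ?thesis .
  qed
  have Gc: "norm (\<psi> x r' - \<psi> x r) \<le> BG / r" if r: "1 < r" "r \<le> r'" for x r r'
  proof -
    have eq: "\<psi> x r' - \<psi> x r = integral {-r'..-r} (\<lambda>y. complex_of_real (f (x, y)) * e2 y) + integral {r..r'} (\<lambda>y. complex_of_real (f (x, y)) * e2 y)"
      unfolding \<psi>_def by (rule split3[OF cBy]) (use r in auto)
    have b1: "norm (integral {-r'..-r} (\<lambda>y. complex_of_real (f (x, y)) * e2 y)) \<le> (2 * real N + 4) * (C / r) / \<bar>k2\<bar>"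
      unfolding e2_def by (rule OY0) (use r in auto)
    have b2: "norm (integral {r..r'} (\<lambda>y. complex_of_real (f (x, y)) * e2 y)) \<le> (2 * real N + 4) * (C / r) / \<bar>k2\<bar>"
      unfolding e2_def by (rule OY0) (use r in auto)
    have "norm (\<psi> x r' - \<psi> x r) \<le> 2 * ((2 * real N + 4) * (C / r) / \<bar>k2\<bar>)"
      unfolding eq by (rule tri2[OF b1 b2])
    also have "\<dots> = BG / r" by (simp add: BG_def)
    finally show ?thesis .
  qed
  have "\<forall>y. \<exists>l. (\<phi> y \<longlongrightarrow> l) at_top \<and> (\<forall>r>1. norm (\<phi> y r - l) \<le> BF / r)"
  proof
    fix y show "\<exists>l. (\<phi> y \<longlongrightarrow> l) at_top \<and> (\<forall>r>1. norm (\<phi> y r - l) \<le> BF / r)"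
      by (rule cauchy_tail) (rule Fc)
  qed
  then have "\<exists>F. \<forall>y. (\<phi> y \<longlongrightarrow> F y) at_top \<and> (\<forall>r>1. norm (\<phi> y r - F y) \<le> BF / r)"
    by (rule choice)
  then obtain F where FL: "\<And>y. (\<phi> y \<longlongrightarrow> F y) at_top" and FB: "\<And>y r. r > 1 \<Longrightarrow> norm (\<phi> y r - F y) \<le> BF / r"
    by blast
  have "\<forall>x. \<exists>l. (\<psi> x \<longlongrightarrow> l) at_top \<and> (\<forall>r>1. norm (\<psi> x r - l) \<le> BG / r)"
  proof
    fix x show "\<exists>l. (\<psi> x \<longlongrightarrow> l) at_top \<and> (\<forall>r>1. norm (\<psi> x r - l) \<le> BG / r)"
      by (rule cauchy_tail) (rule Gc)
  qed
  then have "\<exists>G. \<forall>x. (\<psi> x \<longlongrightarrow> G x) at_top \<and> (\<forall>r>1. norm (\<psi> x r - G x) \<le> BG / r)"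
    by (rule choice)
  then obtain G where GL: "\<And>x. (\<psi> x \<longlongrightarrow> G x) at_top" and GB: "\<And>x r. r > 1 \<Longrightarrow> norm (\<psi> x r - G x) \<le> BG / r"
    by blast
  have IF: "I m n = integral {-m..m} (\<lambda>y. \<phi> y n * e2 y)" for m n
    unfolding I_def \<Phi>_def \<phi>_def by simp
  have IG: "I m n = integral {-n..n} (\<lambda>x. \<psi> x m * e1 x)" for m n
  proof -
    have "I m n = integral {-n..n} (\<lambda>x. integral {-m..m} (\<lambda>y. \<Phi> x y))"
      unfolding I_def by (rule swap_rect[OF c\<Phi>])
    also have "\<dots> = integral {-n..n} (\<lambda>x. \<psi> x m * e1 x)"
    proof (rule integral_cong)
      fix x
      have "integral {-m..m} (\<lambda>y. \<Phi> x y) = integral {-m..m} (\<lambda>y. complex_of_real (f (x, y)) * e2 y * e1 x)"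
        unfolding \<Phi>_def by (rule integral_cong) (simp add: mult_ac)
      also have "\<dots> = \<psi> x m * e1 x" unfolding \<psi>_def by simp
      finally show "integral {-m..m} (\<lambda>y. \<Phi> x y) = \<psi> x m * e1 x" .
    qed
    finally show ?thesis .
  qed
  have ne1: "norm (e1 x) = 1" for x unfolding e1_def by simp
  have ne2: "norm (e2 x) = 1" for x unfolding e2_def by simp
  have big: "1 < n" "BF / n \<le> e" "BG / n \<le> e" if "e > 0" and "n = max 2 (max (BF / e) (BG / e) + 1)" for e n :: real
  proof -
    show "1 < n" using that by simp
    show "BF / n \<le> e" using that by (intro small_div) auto
    show "BG / n \<le> e" using that by (intro small_div) auto
  qed
  have intF: "(\<lambda>y. F y * e2 y) integrable_on {-r..r}" for r
  proof -
    have "(\<lambda>y. F y * e2 y) integrable_on cbox (-r) r"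
    proof (rule integrable_uniform_limit)
      fix e :: real assume e: "e > 0"
      define n where "n = max 2 (max (BF / e) (BG / e) + 1)"
      note nn = big[OF e n_def]
      show "\<exists>g. (\<forall>x\<in>cbox (-r) r. norm (F x * e2 x - g x) \<le> e) \<and> g integrable_on cbox (-r) r"
      proof (intro exI conjI ballI)
        fix y
        have "norm (F y * e2 y - \<phi> y n * e2 y) = norm (\<phi> y n - F y)"
          by (simp add: left_diff_distrib[symmetric] norm_mult ne2 norm_minus_commute)
        also have "\<dots> \<le> e" using FB[OF nn(1), of y] nn(2) by linarith
        finally show "norm (F y * e2 y - \<phi> y n * e2 y) \<le> e" .
      next
        show "(\<lambda>y. \<phi> y n * e2 y) integrable_on cbox (-r) r"
          by (rule integrable_continuous) (intro continuous_intros continuous_on_subset[OF c\<phi>] continuous_on_subset[OF ce2], auto)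
      qed
    qed
    then show ?thesis by simp
  qed
  have intG: "(\<lambda>x. G x * e1 x) integrable_on {-r..r}" for r
  proof -
    have "(\<lambda>x. G x * e1 x) integrable_on cbox (-r) r"
    proof (rule integrable_uniform_limit)
      fix e :: real assume e: "e > 0"
      define n where "n = max 2 (max (BF / e) (BG / e) + 1)"
      note nn = big[OF e n_def]
      show "\<exists>g. (\<forall>x\<in>cbox (-r) r. norm (G x * e1 x - g x) \<le> e) \<and> g integrable_on cbox (-r) r"
      proof (intro exI conjI ballI)
        fix x
        have "norm (G x * e1 x - \<psi> x n * e1 x) = norm (\<psi> x n - G x)"
          by (simp add: left_diff_distrib[symmetric] norm_mult ne1 norm_minus_commute)
        also have "\<dots> \<le> e" using GB[OF nn(1), of x] nn(3) by linarith
        finally show "norm (G x * e1 x - \<psi> x n * e1 x) \<le> e" .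
      next
        show "(\<lambda>x. \<psi> x n * e1 x) integrable_on cbox (-r) r"
          by (rule integrable_continuous) (intro continuous_intros continuous_on_subset[OF c\<psi>] continuous_on_subset[OF ce1], auto)
      qed
    qed
    then show ?thesis by simp
  qed
  have sq: "1 < m * m" "m \<le> m * m" if "1 < m" for m :: real
  proof -
    have "1 * m < m * m" using that by (intro mult_strict_right_mono) auto
    then show "1 < m * m" "m \<le> m * m" using that by linarith+
  qed
  have sqd: "B / (m * m) * (m - - m) = 2 * B / m" if "1 < m" for B m :: real
    using that by (simp add: field_simps)
  have F5: "norm (integral {-m..m} (\<lambda>y. F y * e2 y) - L) \<le> (2 * BF + 2 * Dg) / m" if m: "1 < m" for m
  proof -
    define n where "n = m * m"
    have n: "1 < n" "m \<le> n" using sq[OF m] by (auto simp: n_def)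
    have i\<phi>: "(\<lambda>y. \<phi> y n * e2 y) integrable_on {-m..m}"
      by (rule integrable_continuous_interval) (intro continuous_intros continuous_on_subset[OF c\<phi>] continuous_on_subset[OF ce2], auto)
    have d: "integral {-m..m} (\<lambda>y. F y * e2 y) - I m n = integral {-m..m} (\<lambda>y. F y * e2 y - \<phi> y n * e2 y)"
      unfolding IF by (rule integral_diff[symmetric, OF intF i\<phi>])
    have b1: "norm (integral {-m..m} (\<lambda>y. F y * e2 y - \<phi> y n * e2 y)) \<le> BF / n * (m - - m)"
    proof (rule int_bound_const[OF integrable_diff[OF intF i\<phi>]])
      show "- m \<le> m" "0 \<le> BF / n" using m n BF0 by auto
      fix y
      have "norm (F y * e2 y - \<phi> y n * e2 y) = norm (\<phi> y n - F y)"
        by (simp add: left_diff_distrib[symmetric] norm_mult ne2 norm_minus_commute)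
      also have "\<dots> \<le> BF / n" using FB[OF n(1)] by blast
      finally show "norm (F y * e2 y - \<phi> y n * e2 y) \<le> BF / n" .
    qed
    have b1': "BF / n * (m - - m) = 2 * BF / m" unfolding n_def by (rule sqd[OF m])
    have b2: "norm (I m n - L) \<le> Dg / m + Dg / n" by (rule DB) (use m n in auto)
    have b3: "Dg / n \<le> Dg / m" using Dg0 m n by (intro divide_left_mono) auto
    have "norm (integral {-m..m} (\<lambda>y. F y * e2 y) - L)
        \<le> norm (integral {-m..m} (\<lambda>y. F y * e2 y) - I m n) + norm (I m n - L)"
      using norm_triangle_ineq[of "integral {-m..m} (\<lambda>y. F y * e2 y) - I m n" "I m n - L"] by simp
    also have "\<dots> \<le> 2 * BF / m + 2 * Dg / m" unfolding d using b1 b1' b2 b3 by simp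
    also have "\<dots> = (2 * BF + 2 * Dg) / m" by (simp add: add_divide_distrib)
    finally show ?thesis .
  qed
  have G6: "norm (integral {-n..n} (\<lambda>x. G x * e1 x) - L) \<le> (2 * BG + 2 * Dg) / n" if n: "1 < n" for n
  proof -
    define m where "m = n * n"
    have m: "1 < m" "n \<le> m" using sq[OF n] by (auto simp: m_def)
    have i\<psi>: "(\<lambda>x. \<psi> x m * e1 x) integrable_on {-n..n}"
      by (rule integrable_continuous_interval) (intro continuous_intros continuous_on_subset[OF c\<psi>] continuous_on_subset[OF ce1], auto)
    have d: "integral {-n..n} (\<lambda>x. G x * e1 x) - I m n = integral {-n..n} (\<lambda>x. G x * e1 x - \<psi> x m * e1 x)"
      unfolding IG by (rule integral_diff[symmetric, OF intG i\<psi>])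
    have b1: "norm (integral {-n..n} (\<lambda>x. G x * e1 x - \<psi> x m * e1 x)) \<le> BG / m * (n - - n)"
    proof (rule int_bound_const[OF integrable_diff[OF intG i\<psi>]])
      show "- n \<le> n" "0 \<le> BG / m" using m n BG0 by auto
      fix x
      have "norm (G x * e1 x - \<psi> x m * e1 x) = norm (\<psi> x m - G x)"
        by (simp add: left_diff_distrib[symmetric] norm_mult ne1 norm_minus_commute)
      also have "\<dots> \<le> BG / m" using GB[OF m(1)] by blast
      finally show "norm (G x * e1 x - \<psi> x m * e1 x) \<le> BG / m" .
    qed
    have b1': "BG / m * (n - - n) = 2 * BG / n" unfolding m_def by (rule sqd[OF n])
    have b2: "norm (I m n - L) \<le> Dg / m + Dg / n" by (rule DB) (use m n in auto)
    have b3: "Dg / m \<le> Dg / n" using Dg0 m n by (intro divide_left_mono) auto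
    have "norm (integral {-n..n} (\<lambda>x. G x * e1 x) - L)
        \<le> norm (integral {-n..n} (\<lambda>x. G x * e1 x) - I m n) + norm (I m n - L)"
      using norm_triangle_ineq[of "integral {-n..n} (\<lambda>x. G x * e1 x) - I m n" "I m n - L"] by simp
    also have "\<dots> \<le> 2 * BG / n + 2 * Dg / n" unfolding d using b1 b1' b2 b3 by simp
    also have "\<dots> = (2 * BG + 2 * Dg) / n" by (simp add: add_divide_distrib)
    finally show ?thesis .
  qed
  have T5: "((\<lambda>r. integral {-r..r} (\<lambda>y. F y * e2 y)) \<longlongrightarrow> L) at_top"
    by (rule bound_tendsto[where B="2 * BF + 2 * Dg"]) (use F5 in auto)
  have T6: "((\<lambda>r. integral {-r..r} (\<lambda>x. G x * e1 x)) \<longlongrightarrow> L) at_top"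
    by (rule bound_tendsto[where B="2 * BG + 2 * Dg"]) (use G6 in auto)
  show ?thesis
  proof (rule exI[of _ F], rule exI[of _ G], rule exI[of _ L], intro conjI)
    show "\<forall>y. ((\<lambda>r. integral {-r..r}
              (\<lambda>x. complex_of_real (f (x, y)) * exp (- \<i> * of_real k1 * of_real x)))
            \<longlongrightarrow> F y) at_top"
      using FL unfolding \<phi>_def e1_def by simp
    show "\<forall>x. ((\<lambda>r. integral {-r..r}
              (\<lambda>y. complex_of_real (f (x, y)) * exp (- \<i> * of_real k2 * of_real y)))
            \<longlongrightarrow> G x) at_top"
      using GL unfolding \<psi>_def e2_def by simp
    show "\<forall>r. (\<lambda>y. F y * exp (- \<i> * of_real k2 * of_real y)) integrable_on {-r..r}"
      using intF unfolding e2_def by simp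
    show "\<forall>r. (\<lambda>x. G x * exp (- \<i> * of_real k1 * of_real x)) integrable_on {-r..r}"
      using intG unfolding e1_def by simp
    show "((\<lambda>r. integral {-r..r} (\<lambda>y. F y * exp (- \<i> * of_real k2 * of_real y)))
        \<longlongrightarrow> L) at_top"
      using T5 unfolding e2_def .
    show "((\<lambda>r. integral {-r..r} (\<lambda>x. G x * exp (- \<i> * of_real k1 * of_real x)))
        \<longlongrightarrow> L) at_top"
      using T6 unfolding e1_def .
    show "((\<lambda>(m, n). integral {-m..m} (\<lambda>y. integral {-n..n}
          (\<lambda>x. complex_of_real (f (x, y)) * exp (- \<i> * of_real k1 * of_real x)
                 * exp (- \<i> * of_real k2 * of_real y))))
        \<longlongrightarrow> L) (at_top \<times>\<^sub>F at_top)"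
      using dl unfolding I_def \<Phi>_def e1_def e2_def case_prod_beta' by simp
  qed
qed

end
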